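(* Let $T:X\to Y$ be an injective linear operator between Archimedean vector lattices. If $T$ satisfies condition $(\beta)$, then the inverse operator $T^{-1}:TX\to X$ is disjointness preserving, i.e. whenever $y_1,y_2\in TX$ satisfy $|y_1|\wedge|y_2|=0$ in $Y$, then $|T^{-1}y_1|\wedge|T^{-1}y_2|=0$ in $X$.
   Context: All vector lattices are Archimedean. For a subset $A$ of a vector lattice $X$, $A^d=\{x\in X: |x|\wedge|a|=0 \text{ for all } a\in A\}$ and $A^{dd}=(A^d)^d$. For $a,b\in X$ we write $a\lhd b$ if $\{a\}^{dd}\subseteq\{b\}^{dd}$. A linear operator $T:X\to Y$ satisfies condition $(\beta)$ if $Ta\lhd Tb$ in $Y$ whenever $a\lhd b$ in $X$. A linear operator is disjointness preserving if it maps disjoint elements to disjoint elements. *)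

theory Defs
  imports Main "HOL.Real_Vector_Spaces"
begin

class vector_lattice = ordered_real_vector + lattice

class archimedean_vector_lattice = vector_lattice +
  assumes archimedean_vl: "0 \<le> x \<Longrightarrow> (\<forall>n::nat. of_nat n *\<^sub>R x \<le> y) \<Longrightarrow> x = 0"

definition vabs :: "'a::vector_lattice \<Rightarrow> 'a" where
  "vabs x = sup x (- x)"

definition dcompl :: "'a::vector_lattice set \<Rightarrow> 'a set" where
  "dcompl A = {x. \<forall>a\<in>A. inf (vabs x) (vabs a) = 0}"

definition vl_lhd :: "'a::vector_lattice \<Rightarrow> 'a \<Rightarrow> bool" where
  "vl_lhd a b \<longleftrightarrow> dcompl (dcompl {a}) \<subseteq> dcompl (dcompl {b})"

definition cond_beta :: "('a::vector_lattice \<Rightarrow> 'b::vector_lattice) \<Rightarrow> bool" where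
  "cond_beta T \<longleftrightarrow> (\<forall>a b. vl_lhd a b \<longrightarrow> vl_lhd (T a) (T b))"

end

theory Submission
  imports Defs
begin

lemma vabs_nonneg: "0 \<le> vabs (x::'a::vector_lattice)"
proof -
  have "x \<le> vabs x" "- x \<le> vabs x" unfolding vabs_def by auto
  hence "x + - x \<le> vabs x + vabs x" by (rule add_mono)
  hence "0 \<le> vabs x + vabs x" by simp
  hence "0 \<le> (1/2::real) *\<^sub>R (vabs x + vabs x)" by (intro scaleR_nonneg_nonneg) simp_all
  also have "(1/2::real) *\<^sub>R (vabs x + vabs x) = vabs x"
    by (rule scaleR_half_double)
  finally show ?thesis .
qed

lemma vabs_of_nonneg: "0 \<le> (u::'a::vector_lattice) \<Longrightarrow> vabs u = u"
proof -
  assume u: "0 \<le> u"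
  have "- u \<le> 0" using u by simp
  hence "- u \<le> u" using u by (rule order_trans)
  thus ?thesis unfolding vabs_def by (simp add: sup_absorb1)
qed

lemma vabs_zero: "inf (vabs z) (vabs z) = 0 \<Longrightarrow> (z::'a::vector_lattice) = 0"
proof -
  assume "inf (vabs z) (vabs z) = 0"
  hence h: "sup z (-z) = 0" by (simp add: vabs_def)
  have "z \<le> sup z (-z)" "-z \<le> sup z (-z)" by (rule sup_ge1, rule sup_ge2)
  hence "z \<le> 0" "-z \<le> 0" unfolding h .
  thus ?thesis using antisym[of z 0] by simp
qed

lemma dcompl_anti: "A \<subseteq> B \<Longrightarrow> dcompl B \<subseteq> dcompl A"
  unfolding dcompl_def by auto

lemma in_dd: "x \<in> dcompl (dcompl {x})"
  unfolding dcompl_def by (auto simp: inf_commute)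

lemma lhd_of_d: "dcompl {b} \<subseteq> dcompl {a} \<Longrightarrow> vl_lhd a b"
  unfolding vl_lhd_def by (rule dcompl_anti)

lemma lhd_inf: "vl_lhd (inf (vabs x1) (vabs x2)) (x1::'a::vector_lattice)"
proof (rule lhd_of_d, rule subsetI)
  fix w assume "w \<in> dcompl {x1}"
  hence w: "inf (vabs w) (vabs x1) = 0" by (simp add: dcompl_def)
  let ?u = "inf (vabs x1) (vabs x2)"
  have u0: "0 \<le> ?u" using vabs_nonneg[of x1] vabs_nonneg[of x2] by simp
  hence "vabs ?u = ?u" by (rule vabs_of_nonneg)
  moreover have "inf (vabs w) ?u \<le> inf (vabs w) (vabs x1)" by (rule inf_mono) auto
  moreover have "0 \<le> inf (vabs w) ?u" using vabs_nonneg[of w] u0 by simp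
  ultimately have "inf (vabs w) (vabs ?u) = 0" using w by (metis antisym)
  thus "w \<in> dcompl {?u}" by (simp add: dcompl_def)
qed

lemma lhd_disj_zero:
  assumes "inf (vabs y1) (vabs y2) = 0" "vl_lhd z y1" "vl_lhd z (y2::'a::vector_lattice)"
  shows "z = 0"
proof -
  have z1: "z \<in> dcompl (dcompl {y1})" using assms(2) in_dd[of z] unfolding vl_lhd_def by blast
  have z2: "z \<in> dcompl (dcompl {y2})" using assms(3) in_dd[of z] unfolding vl_lhd_def by blast
  have "{y2} \<subseteq> dcompl {y1}" using assms(1) by (simp add: dcompl_def inf_commute)
  hence "dcompl (dcompl {y1}) \<subseteq> dcompl {y2}" by (rule dcompl_anti)
  hence "z \<in> dcompl {y2}" using z1 by blast
  hence "inf (vabs z) (vabs z) = 0" using z2 unfolding dcompl_def[of "dcompl {y2}"] by blast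
  thus ?thesis by (rule vabs_zero)
qed

theorem theorem2p4:
  fixes T :: "'a::archimedean_vector_lattice \<Rightarrow> 'b::archimedean_vector_lattice"
  assumes "linear T" and "inj T" and "cond_beta T"
  shows "\<forall>y1\<in>range T. \<forall>y2\<in>range T.
           inf (vabs y1) (vabs y2) = 0 \<longrightarrow> inf (vabs (inv T y1)) (vabs (inv T y2)) = 0"
proof (intro ballI impI)
  fix y1 y2 assume "y1 \<in> range T" "y2 \<in> range T" and d: "inf (vabs y1) (vabs y2) = 0"
  then obtain x1 x2 where x: "y1 = T x1" "y2 = T x2" by blast
  have ix: "inv T y1 = x1" "inv T y2 = x2" using x assms(2) by (simp_all add: inv_f_f)
  let ?u = "inf (vabs x1) (vabs x2)"
  have "vl_lhd (T ?u) y1" using assms(3) lhd_inf[of x1 x2] x unfolding cond_beta_def by blast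
  moreover have "vl_lhd (T ?u) y2" using assms(3) lhd_inf[of x2 x1, unfolded inf_commute[of "vabs x2"]] x
    unfolding cond_beta_def by blast
  ultimately have "T ?u = 0" using d lhd_disj_zero by blast
  moreover have "T 0 = 0" using assms(1) by (rule linear_0)
  ultimately have "T ?u = T 0" by simp
  hence "?u = 0" by (rule injD[OF assms(2)])
  thus "inf (vabs (inv T y1)) (vabs (inv T y2)) = 0" using ix by simp
qed

end
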